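(* There is no semi-planar function $f:\mathbb{Z}_6\to\mathbb{Z}_6$.
   Context: $\mathbb{Z}_6$ denotes the additive cyclic group of integers modulo $6$. A function $f:\mathbb{Z}_6\to\mathbb{Z}_6$ is semi-planar if for every non-zero $a\in\mathbb{Z}_6$ and every $y\in\mathbb{Z}_6$, the equation $f(x+a)-f(x)=y$ has either $0$ or $2$ solutions $x\in\mathbb{Z}_6$. *)

theory Defs
  imports Main "HOL-Library.Numeral_Type"
begin

text \<open>Z_6 is modelled by the numeral type 6 from HOL-Library.Numeral_Type
(integers modulo 6 with + and -).\<close>

definition semi_planar :: "(6 \<Rightarrow> 6) \<Rightarrow> bool" where
  "semi_planar f \<longleftrightarrow>
     (\<forall>a::6. a \<noteq> 0 \<longrightarrow> (\<forall>y::6.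
        card {x::6. f (x + a) - f x = y} = 0 \<or> card {x::6. f (x + a) - f x = y} = 2))"

end

theory Submission
  imports Defs
begin

definition Q :: "int list \<Rightarrow> bool" where
 "Q v = (\<forall>a\<in>set [1,2,3::nat]. \<forall>y\<in>set [0,1,2,3,4,5::int]. length (filter (\<lambda>x. (v!((x+a) mod 6) - v!x) mod 6 = y) [0..<6]) \<in> {0,2})"

lemma chk: "\<forall>v2\<in>set [0..5]. \<forall>v3\<in>set [0..5]. \<forall>v4\<in>set [0..5]. \<forall>v5\<in>set [0..5]. \<not> Q [0,0,v2,v3,v4,v5]"
  unfolding Q_def by code_simp

definition R :: "6 \<Rightarrow> int" where "R = Rep_bit0"

lemma R_Abs: "0 \<le> m \<Longrightarrow> m < 6 \<Longrightarrow> Rep_bit0 (Abs_bit0 m :: 6) = m"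
  by (simp add: Abs_bit0_inverse)

lemma R_of_nat: "R (of_nat i) = int i mod 6"
  unfolding R_def by (simp add: bit0.of_nat_eq R_Abs)

lemma R_0: "R 0 = 0" using R_of_nat[of 0] by simp

lemma R_inj: "R p = R q \<longleftrightarrow> p = q"
  unfolding R_def by (simp add: Rep_bit0_inject)

lemma R_minus: "R (p - q) = (R p - R q) mod 6"
  unfolding R_def by (simp add: minus_bit0_def Abs_bit0'_def R_Abs)

lemma R_range: "R p \<in> {0..<6}"
  unfolding R_def using Rep_bit0[of p] by simp

lemma of_nat_mod6: "(of_nat (n mod 6) :: 6) = of_nat n"
  by (simp add: R_inj[symmetric] R_of_nat zmod_int)

lemma R_surj: "(p::6) = of_nat (nat (R p))"
proof -
  have "R (of_nat (nat (R p))) = int (nat (R p)) mod 6" by (rule R_of_nat)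
  then show ?thesis using R_range[of p] by (simp add: R_inj[symmetric] del: of_nat_nat)
qed

lemma card_list: "card {x::6. P x} = length (filter (\<lambda>i. P (of_nat i)) [0..<6])"
proof -
  have inj: "inj_on (of_nat :: nat \<Rightarrow> 6) {0..<6}"
    by (auto simp: inj_on_def R_inj[symmetric] R_of_nat)
  have "{x::6. P x} = of_nat ` {i \<in> {0..<6}. P (of_nat i)}"
  proof (intro set_eqI iffI)
    fix x :: 6 assume "x \<in> {x. P x}"
    then have "P x" by simp
    then show "x \<in> of_nat ` {i \<in> {0..<6}. P (of_nat i)}"
      using R_surj[of x] R_range[of x]
      by (intro image_eqI[of _ _ "nat (R x)"]) auto
  qed auto
  then have "card {x::6. P x} = card {i \<in> {0..<6}. P ((of_nat i)::6)}"
    using inj by (metis (no_types, lifting) card_image inj_on_subset mem_Collect_eq subsetI)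
  also have "\<dots> = length (filter (\<lambda>i. P (of_nat i)) [0..<6])"
    by (subst distinct_length_filter) (auto intro: arg_cong[where f=card])
  finally show ?thesis .
qed

lemma reduce:
  assumes "semi_planar f"
  shows "semi_planar (\<lambda>x. f x - f 0 - (f 1 - f 0) * x)"
  unfolding semi_planar_def
proof (intro allI impI)
  fix a y :: 6 assume a: "a \<noteq> 0"
  let ?c = "(f 1 - f 0)"
  have "{x. (f (x + a) - f 0 - ?c * (x + a)) - (f x - f 0 - ?c * x) = y}
      = {x. f (x + a) - f x = y + ?c * a}"
    by (auto simp: algebra_simps)
  then show "card {x. (f (x + a) - f 0 - ?c * (x + a)) - (f x - f 0 - ?c * x) = y} = 0 \<or>
        card {x. (f (x + a) - f 0 - ?c * (x + a)) - (f x - f 0 - ?c * x) = y} = 2"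
    using assms a unfolding semi_planar_def by simp
qed

lemma toQ:
  assumes "semi_planar g"
  shows "Q (map (\<lambda>i. R (g (of_nat i))) [0..<6])"
  unfolding Q_def
proof (intro ballI)
  fix a :: nat and y :: int
  assume a: "a \<in> set [1,2,3]" and y: "y \<in> set [0,1,2,3,4,5]"
  let ?v = "map (\<lambda>i. R (g (of_nat i))) [0..<6]"
  have a0: "(of_nat a :: 6) \<noteq> 0" using a by auto
  have "card {x. g (x + of_nat a) - g x = of_nat (nat y)} \<in> {0,2}"
    using assms a0 unfolding semi_planar_def by auto
  moreover have "card {x. g (x + of_nat a) - g x = of_nat (nat y)}
     = length (filter (\<lambda>x. (?v!((x+a) mod 6) - ?v!x) mod 6 = y) [0..<6])"
    unfolding card_list
  proof (intro arg_cong[where f=length] filter_cong refl)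
    fix i assume "i \<in> set [0..<6]"
    then have i: "i < 6" by simp
    have "0 \<le> y" "y mod 6 = y" using y by auto
    have Ry: "R (of_nat (nat y)) = y" using y by (auto simp: R_of_nat simp del: of_nat_nat)
    then have Ry': "R (of_int y) = y" using \<open>0 \<le> y\<close> by simp
    have "g (of_nat i + of_nat a) - g (of_nat i) = of_nat (nat y) \<longleftrightarrow>
          R (g (of_nat i + of_nat a) - g (of_nat i)) = R (of_nat (nat y))"
      by (simp add: R_inj)
    also have "\<dots> \<longleftrightarrow> (?v!((i+a) mod 6) - ?v!i) mod 6 = y"
      using i y \<open>0 \<le> y\<close> \<open>y mod 6 = y\<close> by (simp add: Ry Ry' R_minus R_of_nat of_nat_mod6 flip: of_nat_add)
    finally show "g (of_nat i + of_nat a) - g (of_nat i) = of_nat (nat y) \<longleftrightarrow>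
          (?v!((i+a) mod 6) - ?v!i) mod 6 = y" .
  qed
  ultimately show "length (filter (\<lambda>x. (?v!((x+a) mod 6) - ?v!x) mod 6 = y) [0..<6]) \<in> {0,2}"
    by simp
qed

theorem theorem5:
  shows "\<not> (\<exists>f :: 6 \<Rightarrow> 6. semi_planar f)"
proof
  assume "\<exists>f :: 6 \<Rightarrow> 6. semi_planar f"
  then obtain f :: "6 \<Rightarrow> 6" where f: "semi_planar f" by blast
  define g where "g = (\<lambda>x. f x - f 0 - (f 1 - f 0) * x)"
  have g: "semi_planar g" unfolding g_def by (rule reduce[OF f])
  have g0: "g 0 = 0" and g1: "g 1 = 0" unfolding g_def by simp_all
  have Qg: "Q (map (\<lambda>i. R (g (of_nat i))) [0..<6])" by (rule toQ[OF g])
  have eq: "map (\<lambda>i. R (g (of_nat i))) [0..<6] = [0,0,R (g 2),R (g 3),R (g 4),R (g 5)]"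
    by (simp add: upt_rec g0 g1 R_0)
  have mem: "R p \<in> set [0..5]" for p using R_range[of p] by auto
  show False using chk mem Qg unfolding eq by blast
qed
end
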